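(* Assume the tolerances $\varepsilon,\varepsilon_1,\varepsilon_2$ satisfy the same conditions as in the near-optimal recovery theorem, namely $mM\Lambda\varepsilon_2<1$ and $\varepsilon_1+mM\Lambda_s\varepsilon_2+(C_0+\varepsilon_2)(mM\Lambda\varepsilon_1+m(\Lambda_s+\Lambda\varepsilon_1)\delta)\le\varepsilon$ with $\delta:=\frac{M^2}{1-mM\Lambda\varepsilon_2}m\Lambda\varepsilon_2$. Let $u\in K$, $w=\lambda(u)$, and suppose the algorithm is run on noisy observations $\tilde w=w+\eta$ with $\|\eta\|\le\kappa$ (i.e. in step (1) one sets $\hat w:=\tilde w-\lambda(\hat u_0)$). Then the output $\hat u$ satisfies $$\|u-\hat u\|_{H^1(\Omega)}\le R(K_w)_{H^1(\Omega)}+\varepsilon+C\kappa,\qquad C:=(M+\delta)m(C_0+\varepsilon_2).$$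
   Context: Same setting as the near-optimal recovery theorem: $\Omega\subset\mathbb{R}^d$ ($d=2,3$) bounded Lipschitz, $\Gamma=\partial\Omega$, $s>1/2$, $\mathcal H^s(\Omega)$ the harmonic functions in $H^1(\Omega)$ with trace in $H^s(\Gamma)$ normed by $\|v_\Gamma\|_{H^s(\Gamma)}$, $\|v\|_{H^1}\le C_s\|v\|_{\mathcal H^s}$; $K=\{u: -\Delta u=f,\ u_\Gamma\in H^s(\Gamma),\ \|u_\Gamma\|_{H^s(\Gamma)}\le 1\}$ with $f\in H^{-1}(\Omega)$; $u_0$ solves $-\Delta u_0=f$, $u_0|_\Gamma=0$; $\lambda_1,\dots,\lambda_m$ continuous on $H^1(\Omega)$ with bound $\Lambda$ and linearly independent on $\mathcal H^s(\Omega)$; $\Lambda_s=C_s\Lambda$; $\phi_j$ their Riesz representers in $\mathcal H^s(\Omega)$; $G=(\lambda_j(\phi_i))$, $M=\|G^{-1}\|_{\ell_1\to\ell_1}$, $C_0=\max_j\|\phi_j\|_{H^1}$; $K_w=\{u\in K:\lambda(u)=w\}$, $R(K_w)_{H^1(\Omega)}$ its Chebyshev radius in $H^1(\Omega)$; $\|z\|=(\frac1m\sum z_j^2)^{1/2}$ on $\mathbb{R}^m$. Algorithm: $\hat u_0\in H^1$ with $\|u_0-\hat u_0\|_{H^1}\le\varepsilon_1$; $\hat\phi_j\in H^1$ with $\|\phi_j-\hat\phi_j\|_{H^1}\le\varepsilon_2$; $\hat G=(\lambda_j(\hat\phi_i))$; $\hat G\hat a=\hat w$; $\hat u=\hat u_0+\sum_j\hat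 a_j\hat\phi_j$. *)

theory Defs
  imports "HOL-Analysis.Analysis"
begin

text \<open>The type 'a plays the role of H^1(Omega)
 (its norm is the H^1 norm); L is the (linear) operator v |-> -Delta v with values in
 a space 'b (H^{-1}(Omega)); tr is the (linear) trace map to a space 'c of boundary
 functions; HsG is the subspace H^s(Gamma) of 'c, with inner product ipS whose
 induced norm is the H^s(Gamma) norm.\<close>

definition Hs_norm :: "('c \<Rightarrow> 'c \<Rightarrow> real) \<Rightarrow> 'c \<Rightarrow> real" where
  "Hs_norm ipS g = sqrt (ipS g g)"

definition harm_space :: "('a \<Rightarrow> 'b::zero) \<Rightarrow> ('a \<Rightarrow> 'c) \<Rightarrow> 'c set \<Rightarrow> 'a set" where
  "harm_space L tr HsG = {v. L v = 0 \<and> tr v \<in> HsG}"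

definition model_class ::
  "('a \<Rightarrow> 'b) \<Rightarrow> ('a \<Rightarrow> 'c) \<Rightarrow> 'c set \<Rightarrow> ('c \<Rightarrow> 'c \<Rightarrow> real) \<Rightarrow> 'b \<Rightarrow> 'a set" where
  "model_class L tr HsG ipS f = {u. L u = f \<and> tr u \<in> HsG \<and> Hs_norm ipS (tr u) \<le> 1}"

definition cheb_radius :: "'a::real_normed_vector set \<Rightarrow> real" where
  "cheb_radius S = (INF c. SUP u\<in>S. norm (u - c))"

definition meas :: "('m::finite \<Rightarrow> 'a \<Rightarrow> real) \<Rightarrow> 'a \<Rightarrow> real^'m" where
  "meas lam v = (\<chi> j. lam j v)"

definition rms_norm :: "real^'m::finite \<Rightarrow> real" where
  "rms_norm z = sqrt ((1 / real CARD('m)) * (\<Sum>j\<in>UNIV. (z $ j)\<^sup>2))"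

definition l1_norm :: "real^'m::finite \<Rightarrow> real" where
  "l1_norm z = (\<Sum>j\<in>UNIV. \<bar>z $ j\<bar>)"

definition l1_opnorm :: "real^'m::finite^'m \<Rightarrow> real" where
  "l1_opnorm A = (SUP x\<in>{x. l1_norm x \<le> 1}. l1_norm (A *v x))"

text \<open>Gram-type matrix with entries (i,j) = lambda_i(psi_j), so that
 G *v a = lambda(sum_j a_j psi_j).\<close>
definition meas_matrix :: "('m::finite \<Rightarrow> 'a \<Rightarrow> real) \<Rightarrow> ('m \<Rightarrow> 'a) \<Rightarrow> real^'m^'m" where
  "meas_matrix lam psi = (\<chi> i j. lam i (psi j))"

end

theory Submission
  imports Defs
begin


lemma l1_nonneg: "0 \<le> l1_norm z"
  unfolding l1_norm_def by (simp add: sum_nonneg)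

lemma l1_add: "l1_norm (x + y) \<le> l1_norm x + l1_norm y"
  unfolding l1_norm_def by (simp add: sum.distrib[symmetric] sum_mono abs_triangle_ineq)

lemma l1_scale: "l1_norm (c *\<^sub>R x) = \<bar>c\<bar> * l1_norm x"
  unfolding l1_norm_def by (simp add: abs_mult sum_distrib_left)

lemma l1_minus: "l1_norm (- x) = l1_norm x"
  unfolding l1_norm_def by simp

lemma l1_diff: "l1_norm (x - y) \<le> l1_norm x + l1_norm y"
  using l1_add[of x "-y"] l1_minus[of y] by simp

lemma l1_zero: "l1_norm 0 = 0"
  unfolding l1_norm_def by simp

lemma l1_matrix_bound:
  fixes A :: "real^'m::finite^'m"
  assumes "\<And>i j. \<bar>A$i$j\<bar> \<le> c"
  shows "l1_norm (A *v x) \<le> real CARD('m) * c * l1_norm x"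
proof -
  have "l1_norm (A *v x) = (\<Sum>i\<in>UNIV. \<bar>\<Sum>j\<in>UNIV. A$i$j * x$j\<bar>)"
    unfolding l1_norm_def matrix_vector_mult_def by simp
  also have "\<dots> \<le> (\<Sum>i\<in>(UNIV::'m set). \<Sum>j\<in>UNIV. c * \<bar>x$j\<bar>)"
  proof (rule sum_mono)
    fix i
    have "\<bar>\<Sum>j\<in>UNIV. A$i$j * x$j\<bar> \<le> (\<Sum>j\<in>UNIV. \<bar>A$i$j * x$j\<bar>)" by (rule sum_abs)
    also have "\<dots> \<le> (\<Sum>j\<in>UNIV. c * \<bar>x$j\<bar>)"
      by (rule sum_mono) (simp add: abs_mult assms mult_right_mono)
    finally show "\<bar>\<Sum>j\<in>UNIV. A$i$j * x$j\<bar> \<le> (\<Sum>j\<in>UNIV. c * \<bar>x$j\<bar>)" .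
  qed
  also have "\<dots> = real CARD('m) * c * l1_norm x"
    unfolding l1_norm_def by (simp add: sum_distrib_left mult.assoc)
  finally show ?thesis .
qed

lemma l1_opnorm_props:
  fixes A :: "real^'m::finite^'m"
  shows "l1_norm (A *v x) \<le> l1_opnorm A * l1_norm x" "0 \<le> l1_opnorm A"
proof -
  define B where "B = (\<Sum>i\<in>(UNIV::'m set). \<Sum>j\<in>(UNIV::'m set). \<bar>A$i$j\<bar>)"
  have Bij: "\<bar>A$i$j\<bar> \<le> B" for i j
  proof -
    have "\<bar>A$i$j\<bar> \<le> (\<Sum>j\<in>(UNIV::'m set). \<bar>A$i$j\<bar>)"
      by (rule member_le_sum) auto
    also have "\<dots> \<le> B" unfolding B_def
      by (rule member_le_sum[where f="\<lambda>i. \<Sum>j\<in>UNIV. \<bar>A$i$j\<bar>"]) (auto intro: sum_nonneg)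
    finally show ?thesis .
  qed
  have bdd: "bdd_above ((\<lambda>x. l1_norm (A *v x)) ` {x. l1_norm x \<le> 1})"
  proof (rule bdd_aboveI2)
    fix x :: "real^'m" assume "x \<in> {x. l1_norm x \<le> 1}"
    hence "l1_norm x \<le> 1" by simp
    have "l1_norm (A *v x) \<le> real CARD('m) * B * l1_norm x" by (rule l1_matrix_bound[OF Bij])
    also have "\<dots> \<le> real CARD('m) * B * 1"
      apply (rule mult_left_mono) using \<open>l1_norm x \<le> 1\<close> apply simp
      using Bij[of undefined undefined] by simp
    finally show "l1_norm (A *v x) \<le> real CARD('m) * B" by simp
  qed
  have up: "l1_norm (A *v y) \<le> l1_opnorm A" if "l1_norm y \<le> 1" for y :: "real^'m"
    unfolding l1_opnorm_def by (rule cSUP_upper[OF _ bdd]) (use that in simp)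
  show "0 \<le> l1_opnorm A" using up[of 0] by (simp add: l1_zero)
  show "l1_norm (A *v x) \<le> l1_opnorm A * l1_norm x"
  proof (cases "l1_norm x = 0")
    case True
    hence "x = 0" unfolding l1_norm_def
      by (simp add: vec_eq_iff sum_nonneg_eq_0_iff)
    thus ?thesis by (simp add: l1_zero)
  next
    case False
    hence pos: "l1_norm x > 0" using l1_nonneg[of x] by simp
    define y where "y = (1 / l1_norm x) *\<^sub>R x"
    have "l1_norm y = 1" unfolding y_def l1_scale using pos by simp
    hence "l1_norm (A *v y) \<le> l1_opnorm A" by (intro up) simp
    moreover have "A *v y = (1 / l1_norm x) *\<^sub>R (A *v x)"
      unfolding y_def by (simp add: matrix_vector_mult_scaleR)
    ultimately have "(1 / l1_norm x) * l1_norm (A *v x) \<le> l1_opnorm A"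
      using pos by (simp add: l1_scale)
    thus ?thesis using pos by (simp add: field_simps)
  qed
qed

lemma l1_rms: "l1_norm (z::real^'m::finite) \<le> real CARD('m) * rms_norm z"
proof -
  have cs: "(\<Sum>j\<in>(UNIV::'m set). 1 * \<bar>z$j\<bar>)\<^sup>2 \<le> (\<Sum>j\<in>(UNIV::'m set). 1\<^sup>2) * (\<Sum>j\<in>UNIV. \<bar>z$j\<bar>\<^sup>2)"
    by (rule Cauchy_Schwarz_ineq_sum)
  hence "(l1_norm z)\<^sup>2 \<le> real CARD('m) * (\<Sum>j\<in>UNIV. (z$j)\<^sup>2)"
    unfolding l1_norm_def by simp
  also have "\<dots> = (real CARD('m) * rms_norm z)\<^sup>2"
  proof -
    have S: "0 \<le> (\<Sum>j\<in>(UNIV::'m set). (z$j)\<^sup>2)" by (simp add: sum_nonneg)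
    have "(real CARD('m) * rms_norm z)\<^sup>2 = (real CARD('m))\<^sup>2 * ((1 / real CARD('m)) * (\<Sum>j\<in>UNIV. (z$j)\<^sup>2))"
      unfolding rms_norm_def power_mult_distrib using S by simp
    also have "\<dots> = real CARD('m) * (\<Sum>j\<in>UNIV. (z$j)\<^sup>2)" by (simp add: power2_eq_square)
    finally show ?thesis by simp
  qed
  finally show ?thesis
    by (rule power2_le_imp_le) (simp add: rms_norm_def sum_nonneg)
qed

lemma norm_sum_bound:
  fixes v :: "'m::finite \<Rightarrow> 'a::real_normed_vector"
  assumes "\<And>j. norm (v j) \<le> B"
  shows "norm (\<Sum>j\<in>UNIV. c$j *\<^sub>R v j) \<le> B * l1_norm c"
proof -
  have "norm (\<Sum>j\<in>UNIV. c$j *\<^sub>R v j) \<le> (\<Sum>j\<in>UNIV. norm (c$j *\<^sub>R v j))" by (rule norm_sum)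
  also have "\<dots> \<le> (\<Sum>j\<in>UNIV. B * \<bar>c$j\<bar>)"
    by (rule sum_mono) (simp add: assms mult.commute mult_right_mono)
  finally show ?thesis unfolding l1_norm_def by (simp add: sum_distrib_left)
qed



lemma ip_zero:
  assumes "subspace HsG"
    and ip_scale: "\<And>c g h. g \<in> HsG \<Longrightarrow> h \<in> HsG \<Longrightarrow> ipS (c *\<^sub>R g) h = c * ipS g h"
    and "k \<in> HsG"
  shows "ipS 0 k = 0"
  using ip_scale[where c=0 and g=k and h=k] assms(3) by simp

lemma ip_sum:
  assumes sub: "subspace HsG"
    and ip_add: "\<And>g h k. g \<in> HsG \<Longrightarrow> h \<in> HsG \<Longrightarrow> k \<in> HsG \<Longrightarrow> ipS (g + h) k = ipS g k + ipS h k"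
    and ip_scale: "\<And>c g h. g \<in> HsG \<Longrightarrow> h \<in> HsG \<Longrightarrow> ipS (c *\<^sub>R g) h = c * ipS g h"
    and "finite S" and xs: "\<And>j. j \<in> S \<Longrightarrow> x j \<in> HsG" and k: "k \<in> HsG"
  shows "ipS (\<Sum>j\<in>S. c j *\<^sub>R x j) k = (\<Sum>j\<in>S. c j * ipS (x j) k)"
  using assms(4) xs
proof (induction S rule: finite_induct)
  case empty
  then show ?case using ip_zero[where HsG=HsG and ipS=ipS, OF sub _ k] ip_scale by simp
next
  case (insert a F)
  have aF: "x a \<in> HsG" "\<And>j. j \<in> F \<Longrightarrow> x j \<in> HsG" using insert.prems by auto
  have s1: "c a *\<^sub>R x a \<in> HsG" using sub aF(1) by (simp add: subspace_scale)
  have s2: "(\<Sum>j\<in>F. c j *\<^sub>R x j) \<in> HsG" using sub aF(2) by (intro subspace_sum subspace_scale) auto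
  have "ipS (\<Sum>j\<in>insert a F. c j *\<^sub>R x j) k = ipS (c a *\<^sub>R x a + (\<Sum>j\<in>F. c j *\<^sub>R x j)) k"
    using insert.hyps by simp
  also have "\<dots> = c a * ipS (x a) k + (\<Sum>j\<in>F. c j * ipS (x j) k)"
    using ip_add[OF s1 s2 k] ip_scale[OF aF(1) k] insert.IH[OF aF(2)] by simp
  finally show ?case using insert.hyps by simp
qed

lemma ip_orth:
  assumes sub: "subspace HsG"
    and ip_sym: "\<And>g h. g \<in> HsG \<Longrightarrow> h \<in> HsG \<Longrightarrow> ipS g h = ipS h g"
    and ip_add: "\<And>g h k. g \<in> HsG \<Longrightarrow> h \<in> HsG \<Longrightarrow> k \<in> HsG \<Longrightarrow> ipS (g + h) k = ipS g k + ipS h k"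
    and ip_scale: "\<And>c g h. g \<in> HsG \<Longrightarrow> h \<in> HsG \<Longrightarrow> ipS (c *\<^sub>R g) h = c * ipS g h"
    and g: "g \<in> HsG" and h: "h \<in> HsG" and o: "ipS g h = 0"
  shows "ipS (g - h) (g - h) = ipS (g + h) (g + h)"
proof -
  have mh: "(-1) *\<^sub>R h \<in> HsG" using subspace_scale[OF sub h, of "-1"] by simp
  have gh: "g + h \<in> HsG" using sub g h by (simp add: subspace_add)
  have gmh: "g + (-1) *\<^sub>R h \<in> HsG" using subspace_add[OF sub g mh] .
  have o2: "ipS h g = 0" using o ip_sym[OF g h] by simp
  have "ipS (g + (-1) *\<^sub>R h) (g + (-1) *\<^sub>R h) = ipS g (g + (-1) *\<^sub>R h) + ipS ((-1) *\<^sub>R h) (g + (-1) *\<^sub>R h)"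
    using ip_add[OF g mh gmh] .
  also have "\<dots> = ipS (g + (-1) *\<^sub>R h) g - ipS (g + (-1) *\<^sub>R h) h"
    using ip_sym[OF g gmh] ip_scale[OF h gmh, of "-1"] ip_sym[OF h gmh] by simp
  also have "\<dots> = ipS g g + ipS h h"
    using ip_add[OF g mh g] ip_add[OF g mh h] ip_scale[OF h g, of "-1"] ip_scale[OF h h, of "-1"] o o2 by simp
  also have "\<dots> = ipS (g + h) (g + h)"
    using ip_add[OF g h gh] ip_sym[OF g gh] ip_sym[OF h gh] ip_add[OF g h g] ip_add[OF g h h] o o2 by simp
  finally show ?thesis by simp
qed

lemma harm_sum:
  assumes "linear L" "linear tr" "subspace HsG" "\<And>j. x j \<in> harm_space L tr HsG"
  shows "(\<Sum>j\<in>S. c j *\<^sub>R x j) \<in> harm_space L tr HsG"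
  using assms unfolding harm_space_def
  by (auto simp: linear_sum linear_cmul o_def intro!: subspace_sum subspace_scale)

lemma harm_diff:
  assumes "linear L" "linear tr" "subspace HsG" "x \<in> harm_space L tr HsG" "y \<in> harm_space L tr HsG"
  shows "x - y \<in> harm_space L tr HsG"
  using assms unfolding harm_space_def
  by (auto simp: linear_diff intro!: subspace_diff)



lemma meas_comb:
  assumes "\<And>i. linear (lam i)"
  shows "meas lam (\<Sum>j\<in>UNIV. c$j *\<^sub>R x j) = meas_matrix lam x *v c"
  unfolding meas_def meas_matrix_def matrix_vector_mult_def
  using assms by (simp add: vec_eq_iff linear_sum linear_cmul o_def mult.commute)

lemma meas_add:
  assumes "\<And>i. linear (lam i)"
  shows "meas lam (x + y) = meas lam x + meas lam y"
  unfolding meas_def using assms by (simp add: vec_eq_iff linear_add)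

lemma meas_diff:
  assumes "\<And>i. linear (lam i)"
  shows "meas lam (x - y) = meas lam x - meas lam y"
  unfolding meas_def using assms by (simp add: vec_eq_iff linear_diff)

lemma l1_comp_bound:
  assumes "\<And>j. \<bar>z $ j\<bar> \<le> B"
  shows "l1_norm (z::real^'m::finite) \<le> real CARD('m) * B"
proof -
  have "l1_norm z \<le> (\<Sum>j\<in>(UNIV::'m set). B)" unfolding l1_norm_def by (rule sum_mono) (rule assms)
  thus ?thesis by simp
qed



theorem mainTheorem2:
  fixes L :: "'a::real_normed_vector \<Rightarrow> 'b::real_vector"
    and tr :: "'a \<Rightarrow> 'c::real_vector"
    and HsG :: "'c set"
    and ipS :: "'c \<Rightarrow> 'c \<Rightarrow> real"
    and f :: 'b
    and Cs \<Lambda> \<Lambda>s C0 M \<delta> \<epsilon> \<epsilon>1 \<epsilon>2 \<kappa> :: real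
    and lam :: "'m::finite \<Rightarrow> 'a \<Rightarrow> real"
    and \<phi> \<phi>hat :: "'m \<Rightarrow> 'a"
    and u0 u0hat u uhat :: 'a
    and \<eta> w wtilde what ahat :: "real^'m"
  assumes L_lin: "linear L"
    and tr_lin: "linear tr"
    and HsG_sub: "subspace HsG"
    and ip_sym: "\<And>g h. g \<in> HsG \<Longrightarrow> h \<in> HsG \<Longrightarrow> ipS g h = ipS h g"
    and ip_add: "\<And>g h k. g \<in> HsG \<Longrightarrow> h \<in> HsG \<Longrightarrow> k \<in> HsG \<Longrightarrow> ipS (g + h) k = ipS g k + ipS h k"
    and ip_scale: "\<And>c g h. g \<in> HsG \<Longrightarrow> h \<in> HsG \<Longrightarrow> ipS (c *\<^sub>R g) h = c * ipS g h"
    and ip_pos: "\<And>g. g \<in> HsG \<Longrightarrow> g \<noteq> 0 \<Longrightarrow> ipS g g > 0"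
    and Cs_bound: "\<And>v. v \<in> harm_space L tr HsG \<Longrightarrow> norm v \<le> Cs * Hs_norm ipS (tr v)"
    and u0_def: "L u0 = f" "tr u0 = 0"
    and lam_lin: "\<And>j. linear (lam j)"
    and lam_bound: "\<And>j v. \<bar>lam j v\<bar> \<le> \<Lambda> * norm v"
    and lam_indep: "\<And>c::real^'m. (\<forall>v\<in>harm_space L tr HsG. (\<Sum>j\<in>UNIV. c $ j * lam j v) = 0) \<Longrightarrow> c = 0"
    and \<Lambda>s_def: "\<Lambda>s = Cs * \<Lambda>"
    and \<phi>_mem: "\<And>j. \<phi> j \<in> harm_space L tr HsG"
    and \<phi>_riesz: "\<And>j v. v \<in> harm_space L tr HsG \<Longrightarrow> ipS (tr (\<phi> j)) (tr v) = lam j v"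
    and M_def: "M = l1_opnorm (matrix_inv (meas_matrix lam \<phi>))"
    and C0_def: "C0 = Max (range (\<lambda>j. norm (\<phi> j)))"
    and u0hat_err: "norm (u0 - u0hat) \<le> \<epsilon>1"
    and \<phi>hat_err: "\<And>j. norm (\<phi> j - \<phi>hat j) \<le> \<epsilon>2"
    and tol1: "real CARD('m) * M * \<Lambda> * \<epsilon>2 < 1"
    and \<delta>_def: "\<delta> = M\<^sup>2 / (1 - real CARD('m) * M * \<Lambda> * \<epsilon>2) * real CARD('m) * \<Lambda> * \<epsilon>2"
    and tol2: "\<epsilon>1 + real CARD('m) * M * \<Lambda>s * \<epsilon>2
              + (C0 + \<epsilon>2) * (real CARD('m) * M * \<Lambda> * \<epsilon>1
                               + real CARD('m) * (\<Lambda>s + \<Lambda> * \<epsilon>1) * \<delta>) \<le> \<epsilon>"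
    and u_in_K: "u \<in> model_class L tr HsG ipS f"
    and w_def: "w = meas lam u"
    and noise: "wtilde = w + \<eta>" "rms_norm \<eta> \<le> \<kappa>"
    and what_def: "what = wtilde - meas lam u0hat"
    and ahat_solves: "meas_matrix lam \<phi>hat *v ahat = what"
    and uhat_def: "uhat = u0hat + (\<Sum>j\<in>UNIV. ahat $ j *\<^sub>R \<phi>hat j)"
  shows "norm (u - uhat)
           \<le> cheb_radius {v \<in> model_class L tr HsG ipS f. meas lam v = w}
              + \<epsilon> + (M + \<delta>) * real CARD('m) * (C0 + \<epsilon>2) * \<kappa>"
proof -
  define G where "G = meas_matrix lam \<phi>"
  define Gh where "Gh = meas_matrix lam \<phi>hat"
  define Gi where "Gi = matrix_inv G"
  define Hm where "Hm = harm_space L tr HsG"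
  have lam0: "\<And>j. lam j 0 = 0" using lam_lin linear_0 by blast
  have ipz: "\<And>k. k \<in> HsG \<Longrightarrow> ipS 0 k = 0"
    using ip_zero[where HsG=HsG and ipS=ipS, OF HsG_sub] ip_scale by blast
  have Hs_nn: "0 \<le> Hs_norm ipS g" if "g \<in> HsG" for g
  proof (cases "g = 0")
    case True thus ?thesis using ipz[OF subspace_0[OF HsG_sub]] by (simp add: Hs_norm_def)
  next
    case False thus ?thesis using ip_pos[OF that] by (simp add: Hs_norm_def less_imp_le)
  qed
  have ex_nz: "\<exists>v\<in>Hm. v \<noteq> 0"
  proof (rule ccontr)
    assume "\<not> (\<exists>v\<in>Hm. v \<noteq> 0)"
    hence "\<forall>v\<in>harm_space L tr HsG. (\<Sum>j\<in>UNIV. (vec 1::real^'m) $ j * lam j v) = 0"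
      using lam0 unfolding Hm_def by auto
    hence "(vec 1::real^'m) = 0" by (rule lam_indep)
    thus False by (simp add: vec_eq_iff)
  qed
  then obtain v1 where v1: "v1 \<in> Hm" "v1 \<noteq> 0" by blast
  have Lam_nn: "0 \<le> \<Lambda>"
  proof -
    have "0 \<le> \<Lambda> * norm v1" using lam_bound[of undefined v1] by linarith
    thus ?thesis using v1(2) by (simp add: zero_le_mult_iff)
  qed
  have Cs_nn: "0 \<le> Cs"
  proof -
    have tv1: "tr v1 \<in> HsG" using v1(1) unfolding Hm_def harm_space_def by simp
    have "0 < norm v1" using v1(2) by simp
    also have "\<dots> \<le> Cs * Hs_norm ipS (tr v1)" using Cs_bound v1(1) unfolding Hm_def by blast
    finally show ?thesis using Hs_nn[OF tv1] by (simp add: zero_less_mult_iff)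
  qed
  have Ls_nn: "0 \<le> \<Lambda>s" using \<Lambda>s_def Cs_nn Lam_nn by simp
  have e1_nn: "0 \<le> \<epsilon>1" using u0hat_err norm_ge_zero order_trans by blast
  have e2_nn: "0 \<le> \<epsilon>2" using \<phi>hat_err[of undefined] norm_ge_zero order_trans by blast
  have "0 \<le> rms_norm \<eta>" unfolding rms_norm_def by (simp add: sum_nonneg)
  hence kap_nn: "0 \<le> \<kappa>" using noise(2) by linarith
  have M_nn: "0 \<le> M" using M_def l1_opnorm_props(2) by simp
  have phi_le: "norm (\<phi> j) \<le> C0" for j unfolding C0_def by (rule Max_ge) auto
  have C0_nn: "0 \<le> C0" using phi_le[of undefined] norm_ge_zero order_trans by blast
  have phihat_le: "norm (\<phi>hat j) \<le> C0 + \<epsilon>2" for j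
  proof -
    have "norm (\<phi>hat j) \<le> norm (\<phi> j) + norm (\<phi> j - \<phi>hat j)" using norm_triangle_ineq4[of "\<phi> j" "\<phi> j - \<phi>hat j"] by simp
    thus ?thesis using phi_le[of j] \<phi>hat_err[of j] by linarith
  qed
  have harm_phi: "\<And>j. \<phi> j \<in> Hm" using \<phi>_mem unfolding Hm_def by blast
  have trHs: "\<And>v. v \<in> Hm \<Longrightarrow> tr v \<in> HsG" unfolding Hm_def harm_space_def by blast
  have trcomb: "tr (\<Sum>j\<in>UNIV. c$j *\<^sub>R \<phi> j) = (\<Sum>j\<in>UNIV. c$j *\<^sub>R tr (\<phi> j))" for c :: "real^'m"
    using tr_lin by (simp add: linear_sum linear_cmul o_def)
  have ipcomb: "ipS (\<Sum>j\<in>UNIV. c$j *\<^sub>R tr (\<phi> j)) (tr v) = (\<Sum>j\<in>UNIV. c$j * lam j v)"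
    if "v \<in> Hm" for c :: "real^'m" and v
  proof -
    have "ipS (\<Sum>j\<in>UNIV. c$j *\<^sub>R tr (\<phi> j)) (tr v) = (\<Sum>j\<in>UNIV. c$j * ipS (tr (\<phi> j)) (tr v))"
      by (rule ip_sum[where HsG=HsG, OF HsG_sub ip_add ip_scale]) (auto intro: trHs harm_phi that)
    also have "\<dots> = (\<Sum>j\<in>UNIV. c$j * lam j v)" using \<phi>_riesz that unfolding Hm_def by simp
    finally show ?thesis .
  qed
  have combHm: "(\<Sum>j\<in>UNIV. c$j *\<^sub>R \<phi> j) \<in> Hm" for c :: "real^'m"
    unfolding Hm_def by (rule harm_sum[OF L_lin tr_lin HsG_sub \<phi>_mem])
  have Gcomb: "meas lam (\<Sum>j\<in>UNIV. c$j *\<^sub>R \<phi> j) = G *v c" for c :: "real^'m"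
    unfolding G_def by (rule meas_comb[OF lam_lin])
  have Ginj: "\<forall>c. G *v c = 0 \<longrightarrow> c = 0"
  proof (intro allI impI)
    fix c :: "real^'m" assume Gc: "G *v c = 0"
    define \<psi> where "\<psi> = (\<Sum>j\<in>UNIV. c$j *\<^sub>R \<phi> j)"
    have psiH: "\<psi> \<in> Hm" unfolding \<psi>_def by (rule combHm)
    have lampsi: "lam j \<psi> = 0" for j
      using Gcomb[of c] Gc unfolding \<psi>_def meas_def by (simp add: vec_eq_iff)
    have "ipS (tr \<psi>) (tr \<psi>) = (\<Sum>j\<in>UNIV. c$j * lam j \<psi>)"
      using ipcomb[where c=c and v=\<psi>, OF psiH] unfolding \<psi>_def trcomb by simp
    hence "ipS (tr \<psi>) (tr \<psi>) = 0" using lampsi by simp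
    hence tr0: "tr \<psi> = 0" using ip_pos[OF trHs[OF psiH]] by force
    have "\<forall>v\<in>harm_space L tr HsG. (\<Sum>j\<in>UNIV. c $ j * lam j v) = 0"
    proof
      fix v assume "v \<in> harm_space L tr HsG"
      hence vH: "v \<in> Hm" unfolding Hm_def .
      have "(\<Sum>j\<in>UNIV. c $ j * lam j v) = ipS (tr \<psi>) (tr v)"
        unfolding \<psi>_def trcomb using ipcomb[OF vH] by simp
      also have "\<dots> = 0" using tr0 ipz trHs[OF vH] by simp
      finally show "(\<Sum>j\<in>UNIV. c $ j * lam j v) = 0" .
    qed
    thus "c = 0" by (rule lam_indep)
  qed
  have "\<exists>B. B ** G = mat 1" using Ginj matrix_left_invertible_ker by blast
  hence Ginv: "invertible G" using invertible_left_inverse by blast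
  have GGi: "G ** Gi = mat 1 \<and> Gi ** G = mat 1"
    unfolding Gi_def matrix_inv_def using Ginv unfolding invertible_def by (rule someI_ex)
  have Mb: "l1_norm (Gi *v x) \<le> M * l1_norm x" for x
    unfolding M_def Gi_def[symmetric] G_def[symmetric] by (rule l1_opnorm_props(1))
  define ws where "ws = meas lam u - meas lam u0"
  define a where "a = Gi *v ws"
  have Ga: "G *v a = ws" unfolding a_def using GGi by (simp add: matrix_vector_mul_assoc)
  define ustar where "ustar = u0 + (\<Sum>j\<in>UNIV. a$j *\<^sub>R \<phi> j)"
  have uK: "L u = f" "tr u \<in> HsG" "Hs_norm ipS (tr u) \<le> 1"
    using u_in_K unfolding model_class_def by auto
  have uu0H: "u - u0 \<in> Hm"
    unfolding Hm_def harm_space_def using uK u0_def L_lin tr_lin by (simp add: linear_diff)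
  have nuu0: "norm (u - u0) \<le> Cs"
  proof -
    have "norm (u - u0) \<le> Cs * Hs_norm ipS (tr (u - u0))" using Cs_bound uu0H unfolding Hm_def by blast
    also have "tr (u - u0) = tr u" using tr_lin u0_def by (simp add: linear_diff)
    finally have "norm (u - u0) \<le> Cs * Hs_norm ipS (tr u)" .
    moreover have "Cs * Hs_norm ipS (tr u) \<le> Cs * 1" using uK(3) Cs_nn by (rule mult_left_mono)
    ultimately show ?thesis by simp
  qed
  have wsj: "\<bar>ws$j\<bar> \<le> \<Lambda>s" for j
  proof -
    have "ws$j = lam j (u - u0)" unfolding ws_def meas_def using lam_lin by (simp add: linear_diff)
    hence "\<bar>ws$j\<bar> \<le> \<Lambda> * norm (u - u0)" using lam_bound by simp
    also have "\<dots> \<le> \<Lambda> * Cs" using nuu0 Lam_nn by (simp add: mult_left_mono)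
    finally show ?thesis using \<Lambda>s_def by (simp add: mult.commute)
  qed
  have l1ws: "l1_norm ws \<le> real CARD('m) * \<Lambda>s" by (rule l1_comp_bound[OF wsj])
  have l1a: "l1_norm a \<le> real CARD('m) * M * \<Lambda>s"
  proof -
    have "l1_norm a \<le> M * l1_norm ws" unfolding a_def by (rule Mb)
    also have "\<dots> \<le> M * (real CARD('m) * \<Lambda>s)" using l1ws M_nn by (simp add: mult_left_mono)
    finally show ?thesis by (simp add: mult_ac)
  qed
  have meas_ustar: "meas lam ustar = w"
    unfolding ustar_def meas_add[OF lam_lin] Gcomb Ga ws_def w_def by simp
  have ustarH: "ustar - u0 \<in> Hm" unfolding ustar_def by (simp add: combHm)
  have Lustar: "L ustar = f"
    using ustarH u0_def L_lin unfolding Hm_def harm_space_def by (simp add: linear_diff)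
  have trustar: "tr ustar \<in> HsG"
    using ustarH u0_def tr_lin unfolding Hm_def harm_space_def by (simp add: linear_diff)
  define u' where "u' = ustar + (ustar - u)"
  have uuH: "u - ustar \<in> Hm"
  proof -
    have "u - ustar = (u - u0) - (ustar - u0)" by simp
    thus ?thesis using harm_diff[OF L_lin tr_lin HsG_sub, of "u - u0" "ustar - u0"] uu0H ustarH
      unfolding Hm_def by simp
  qed
  define g where "g = tr ustar"
  define h where "h = tr (u - ustar)"
  have gH: "g \<in> HsG" unfolding g_def by (rule trustar)
  have hH: "h \<in> HsG" unfolding h_def by (rule trHs[OF uuH])
  have gh0: "ipS g h = 0"
  proof -
    have "g = (\<Sum>j\<in>UNIV. a$j *\<^sub>R tr (\<phi> j))"
      unfolding g_def ustar_def using tr_lin u0_def by (simp add: linear_add trcomb)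
    hence "ipS g h = (\<Sum>j\<in>UNIV. a$j * lam j (u - ustar))"
      unfolding h_def using ipcomb[OF uuH] by simp
    also have "\<dots> = 0"
    proof -
      have "lam j (u - ustar) = 0" for j
        using meas_ustar w_def lam_lin unfolding meas_def by (simp add: linear_diff vec_eq_iff)
      thus ?thesis by simp
    qed
    finally show ?thesis .
  qed
  have tru: "tr u = g + h" unfolding g_def h_def using tr_lin by (simp add: linear_diff)
  have tru': "tr u' = g - h" unfolding g_def h_def u'_def using tr_lin by (simp add: linear_diff linear_add)
  have u'K: "u' \<in> model_class L tr HsG ipS f"
  proof -
    have "L u' = f" unfolding u'_def using L_lin Lustar uK(1) by (simp add: linear_diff linear_add)
    moreover have "tr u' \<in> HsG" using tru' gH hH HsG_sub by (simp add: subspace_diff)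
    moreover have "Hs_norm ipS (tr u') = Hs_norm ipS (tr u)"
      unfolding tru tru' Hs_norm_def
      using ip_orth[where HsG=HsG, OF HsG_sub ip_sym ip_add ip_scale gH hH gh0] by simp
    ultimately show ?thesis using uK(3) unfolding model_class_def by simp
  qed
  have meas_u': "meas lam u' = w"
    unfolding u'_def meas_add[OF lam_lin] meas_diff[OF lam_lin] meas_ustar w_def by simp
  define Kw where "Kw = {v \<in> model_class L tr HsG ipS f. meas lam v = w}"
  have uKw: "u \<in> Kw" unfolding Kw_def using u_in_K w_def by simp
  have u'Kw: "u' \<in> Kw" unfolding Kw_def using u'K meas_u' by simp
  have bdd: "bdd_above ((\<lambda>v. norm (v - c)) ` Kw)" for c
  proof (rule bdd_aboveI2)
    fix v assume "v \<in> Kw"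
    hence vK: "L v = f" "tr v \<in> HsG" "Hs_norm ipS (tr v) \<le> 1"
      unfolding Kw_def model_class_def by auto
    have vH: "v - u0 \<in> Hm"
      unfolding Hm_def harm_space_def using vK u0_def L_lin tr_lin by (simp add: linear_diff)
    have "norm (v - u0) \<le> Cs * Hs_norm ipS (tr (v - u0))" using Cs_bound vH unfolding Hm_def by blast
    also have "tr (v - u0) = tr v" using tr_lin u0_def by (simp add: linear_diff)
    finally have "norm (v - u0) \<le> Cs * Hs_norm ipS (tr v)" .
    moreover have "Cs * Hs_norm ipS (tr v) \<le> Cs * 1" using vK(3) Cs_nn by (rule mult_left_mono)
    ultimately have "norm (v - u0) \<le> Cs" by simp
    moreover have "norm (v - c) \<le> norm (v - u0) + norm (u0 - c)" by (rule norm_diff_triangle_le[of v u0]) simp_all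
    ultimately show "norm (v - c) \<le> Cs + norm (u0 - c)" by linarith
  qed
  have cheb: "norm (u - ustar) \<le> cheb_radius Kw"
    unfolding cheb_radius_def
  proof (rule cINF_greatest)
    show "UNIV \<noteq> {}" by simp
    fix c
    have s1: "norm (u - c) \<le> (SUP v\<in>Kw. norm (v - c))" by (rule cSUP_upper[OF uKw bdd])
    have s2: "norm (u' - c) \<le> (SUP v\<in>Kw. norm (v - c))" by (rule cSUP_upper[OF u'Kw bdd])
    have "u - u' = 2 *\<^sub>R (u - ustar)" unfolding u'_def by (simp add: algebra_simps scaleR_2)
    hence "2 * norm (u - ustar) = norm ((u - c) - (u' - c))" by simp
    also have "\<dots> \<le> norm (u - c) + norm (u' - c)" by (rule norm_triangle_ineq4)
    finally show "norm (u - ustar) \<le> (SUP v\<in>Kw. norm (v - c))" using s1 s2 by linarith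
  qed
  define E where "E = Gh - G"
  have Eij: "\<bar>E$i$j\<bar> \<le> \<Lambda> * \<epsilon>2" for i j
  proof -
    have "E$i$j = lam i (\<phi>hat j - \<phi> j)"
      unfolding E_def Gh_def G_def meas_matrix_def using lam_lin by (simp add: linear_diff)
    hence "\<bar>E$i$j\<bar> \<le> \<Lambda> * norm (\<phi>hat j - \<phi> j)" using lam_bound by simp
    also have "\<dots> \<le> \<Lambda> * \<epsilon>2" using \<phi>hat_err[of j] Lam_nn by (simp add: norm_minus_commute mult_left_mono)
    finally show ?thesis .
  qed
  define e where "e = meas lam u0 - meas lam u0hat + \<eta>"
  have l1e: "l1_norm e \<le> real CARD('m) * \<Lambda> * \<epsilon>1 + real CARD('m) * \<kappa>"
  proof -
    have cj: "\<bar>(meas lam u0 - meas lam u0hat)$j\<bar> \<le> \<Lambda> * \<epsilon>1" for j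
    proof -
      have "(meas lam u0 - meas lam u0hat)$j = lam j (u0 - u0hat)"
        unfolding meas_def using lam_lin by (simp add: linear_diff)
      hence "\<bar>(meas lam u0 - meas lam u0hat)$j\<bar> \<le> \<Lambda> * norm (u0 - u0hat)" using lam_bound by simp
      also have "\<dots> \<le> \<Lambda> * \<epsilon>1" using u0hat_err Lam_nn by (simp add: mult_left_mono)
      finally show ?thesis .
    qed
    have "l1_norm e \<le> l1_norm (meas lam u0 - meas lam u0hat) + l1_norm \<eta>" unfolding e_def by (rule l1_add)
    also have "\<dots> \<le> real CARD('m) * (\<Lambda> * \<epsilon>1) + real CARD('m) * \<kappa>"
    proof (rule add_mono)
      show "l1_norm (meas lam u0 - meas lam u0hat) \<le> real CARD('m) * (\<Lambda> * \<epsilon>1)" by (rule l1_comp_bound[OF cj])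
      have "l1_norm \<eta> \<le> real CARD('m) * rms_norm \<eta>" by (rule l1_rms)
      also have "\<dots> \<le> real CARD('m) * \<kappa>" using noise(2) by (simp add: mult_left_mono)
      finally show "l1_norm \<eta> \<le> real CARD('m) * \<kappa>" .
    qed
    finally show ?thesis by (simp add: mult_ac)
  qed
  have what_eq: "what = ws + e" unfolding what_def noise(1) ws_def e_def w_def by simp
  define d where "d = ahat - a"
  have Gd: "G *v d = e - E *v ahat"
  proof -
    have "G = Gh - E" unfolding E_def by simp
    hence "G *v ahat = Gh *v ahat - E *v ahat" by (simp add: matrix_vector_mult_diff_rdistrib)
    hence "G *v ahat = what - E *v ahat" using ahat_solves unfolding Gh_def by simp
    thus ?thesis unfolding d_def using Ga what_eq by (simp add: matrix_vector_mult_diff_distrib)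
  qed
  have dd: "d = Gi *v (e - E *v ahat)"
    using GGi Gd by (metis matrix_vector_mul_assoc matrix_vector_mul_lid)
  define q where "q = real CARD('m) * M * \<Lambda> * \<epsilon>2"
  have q_nn: "0 \<le> q" unfolding q_def using M_nn Lam_nn e2_nn by simp
  have q1: "q < 1" unfolding q_def by (rule tol1)
  have l1d_rec: "l1_norm d \<le> M * l1_norm e + q * (l1_norm a + l1_norm d)"
  proof -
    have "l1_norm d \<le> M * l1_norm (e - E *v ahat)" unfolding dd by (rule Mb)
    also have "\<dots> \<le> M * (l1_norm e + real CARD('m) * (\<Lambda> * \<epsilon>2) * l1_norm ahat)"
      using l1_diff[of e "E *v ahat"] l1_matrix_bound[OF Eij, of ahat] M_nn
      by (intro mult_left_mono) simp_all
    also have "l1_norm ahat \<le> l1_norm a + l1_norm d"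
      using l1_add[of a d] unfolding d_def by simp
    hence "M * (l1_norm e + real CARD('m) * (\<Lambda> * \<epsilon>2) * l1_norm ahat)
          \<le> M * (l1_norm e + real CARD('m) * (\<Lambda> * \<epsilon>2) * (l1_norm a + l1_norm d))"
      using M_nn Lam_nn e2_nn by (intro mult_left_mono add_left_mono) simp_all
    finally show ?thesis unfolding q_def by (simp add: algebra_simps)
  qed
  define T where "T = real CARD('m) * M * \<Lambda> * \<epsilon>1 + real CARD('m) * (\<Lambda>s + \<Lambda> * \<epsilon>1) * \<delta>
                      + (M + \<delta>) * real CARD('m) * \<kappa>"
  have del_q: "\<delta> = M * q / (1 - q)" unfolding \<delta>_def q_def by (simp add: power2_eq_square field_simps)
  have l1d: "l1_norm d \<le> T"
  proof -
    have "(1 - q) * l1_norm d \<le> M * l1_norm e + q * l1_norm a" using l1d_rec by (simp add: algebra_simps)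
    also have "\<dots> \<le> M * (real CARD('m) * \<Lambda> * \<epsilon>1 + real CARD('m) * \<kappa>) + q * (real CARD('m) * M * \<Lambda>s)"
      using l1e l1a M_nn q_nn by (intro add_mono mult_left_mono) simp_all
    also have "\<dots> = (1 - q) * T"
    proof -
      define X where "X = real CARD('m) * \<Lambda> * \<epsilon>1 + real CARD('m) * \<kappa>"
      define Y where "Y = real CARD('m) * \<Lambda>s + X"
      have dq: "(1 - q) * \<delta> = M * q" using del_q q1 by simp
      have TXY: "T = M * X + \<delta> * Y" unfolding T_def X_def Y_def by (simp add: algebra_simps)
      have "(1 - q) * T = (1 - q) * M * X + ((1 - q) * \<delta>) * Y" unfolding TXY by (simp add: algebra_simps)
      also have "\<dots> = (1 - q) * M * X + (M * q) * Y" unfolding dq ..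
      also have "\<dots> = M * X + q * (real CARD('m) * M * \<Lambda>s)" unfolding Y_def by (simp add: algebra_simps)
      finally show ?thesis unfolding X_def by simp
    qed
    finally show ?thesis using q1 by simp
  qed
  have diff_eq: "uhat - ustar = (u0hat - u0) + (\<Sum>j\<in>UNIV. a$j *\<^sub>R (\<phi>hat j - \<phi> j))
                                 + (\<Sum>j\<in>UNIV. d$j *\<^sub>R \<phi>hat j)"
  proof -
    have "(\<Sum>j\<in>UNIV. ahat$j *\<^sub>R \<phi>hat j) - (\<Sum>j\<in>UNIV. a$j *\<^sub>R \<phi> j)
        = (\<Sum>j\<in>UNIV. a$j *\<^sub>R (\<phi>hat j - \<phi> j) + d$j *\<^sub>R \<phi>hat j)"
      unfolding sum_subtractf[symmetric] d_def by (rule sum.cong) (simp_all add: algebra_simps)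
    thus ?thesis unfolding uhat_def ustar_def sum.distrib by (simp add: algebra_simps)
  qed
  have nd: "norm (uhat - ustar) \<le> \<epsilon>1 + \<epsilon>2 * l1_norm a + (C0 + \<epsilon>2) * l1_norm d"
  proof -
    have n1: "norm (\<Sum>j\<in>UNIV. a$j *\<^sub>R (\<phi>hat j - \<phi> j)) \<le> \<epsilon>2 * l1_norm a"
      by (rule norm_sum_bound) (simp add: \<phi>hat_err norm_minus_commute)
    have n2: "norm (\<Sum>j\<in>UNIV. d$j *\<^sub>R \<phi>hat j) \<le> (C0 + \<epsilon>2) * l1_norm d"
      by (rule norm_sum_bound) (rule phihat_le)
    have n0: "norm (u0hat - u0) \<le> \<epsilon>1" using u0hat_err by (simp add: norm_minus_commute)
    show ?thesis unfolding diff_eq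
      using norm_triangle_ineq[of "(u0hat - u0) + (\<Sum>j\<in>UNIV. a$j *\<^sub>R (\<phi>hat j - \<phi> j))" "\<Sum>j\<in>UNIV. d$j *\<^sub>R \<phi>hat j"]
        norm_triangle_ineq[of "u0hat - u0" "\<Sum>j\<in>UNIV. a$j *\<^sub>R (\<phi>hat j - \<phi> j)"] n0 n1 n2
      by linarith
  qed
  have "norm (u - uhat) \<le> norm (u - ustar) + norm (uhat - ustar)"
    using norm_triangle_ineq4[of "u - ustar" "uhat - ustar"] by simp
  also have "\<dots> \<le> cheb_radius Kw + (\<epsilon>1 + \<epsilon>2 * (real CARD('m) * M * \<Lambda>s) + (C0 + \<epsilon>2) * T)"
    using cheb nd mult_left_mono[OF l1a e2_nn] mult_left_mono[OF l1d, of "C0 + \<epsilon>2"] C0_nn e2_nn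
    by linarith
  also have "\<epsilon>1 + \<epsilon>2 * (real CARD('m) * M * \<Lambda>s) + (C0 + \<epsilon>2) * T
      = (\<epsilon>1 + real CARD('m) * M * \<Lambda>s * \<epsilon>2
              + (C0 + \<epsilon>2) * (real CARD('m) * M * \<Lambda> * \<epsilon>1
                               + real CARD('m) * (\<Lambda>s + \<Lambda> * \<epsilon>1) * \<delta>))
        + (M + \<delta>) * real CARD('m) * (C0 + \<epsilon>2) * \<kappa>"
    unfolding T_def by (simp add: algebra_simps)
  finally show ?thesis unfolding Kw_def using tol2 by linarith
qed

end
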